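(* Let $p$ be an odd prime. Let $\mathcal{L}=(L_1,\dots,L_m)$ be a square-independent system of linear forms in $d$ variables over $\mathbb{F}_p$ and let $\Gamma_2=(q_1,\dots,q_{d_2})$ be a quadratic map from $\mathbb{F}_p^n$ to $\mathbb{F}_p^{d_2}$ of rank at least $r$. Let $\phi_1,\dots,\phi_m$ be linear maps from $(\mathbb{F}_p^n)^d$ to $\mathbb{F}_p^{d_2}$ and let $b_1,\dots,b_m\in\mathbb{F}_p^{d_2}$. Let $\mathbf{x}=(x_1,\dots,x_d)$ be chosen uniformly at random from $(\mathbb{F}_p^n)^d$. Then the probability that $\Gamma_2(L_i(\mathbf{x}))=\phi_i(\mathbf{x})+b_i$ for every $i=1,\dots,m$ differs from $p^{-md_2}$ by at most $p^{-r/2}$.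
   Context: A linear form in $d$ variables is $L(x_1,\dots,x_d)=\sum_{r=1}^d\gamma_rx_r$ with $\gamma_r\in\mathbb{F}_p$; for $\mathbf{x}\in(\mathbb{F}_p^n)^d$, $L(\mathbf{x})=\sum_r\gamma_rx_r\in\mathbb{F}_p^n$. A system $(L_1,\dots,L_m)$ with $L_i=\sum_r\gamma^{(i)}_rx_r$ is square-independent if the $d\times d$ matrices $(\gamma^{(i)}_r\gamma^{(i)}_s)_{r,s}$, $i=1,\dots,m$, are linearly independent over $\mathbb{F}_p$. A quadratic form on $\mathbb{F}_p^n$ is $q(x)=x^TMx$ with $M$ a symmetric matrix over $\mathbb{F}_p$; its associated symmetric bilinear form is $\beta(x,y)=(q(x+y)-q(x)-q(y))/2$. A quadratic map $\Gamma_2:\mathbb{F}_p^n\to\mathbb{F}_p^{d_2}$ is $x\mapsto(q_1(x),\dots,q_{d_2}(x))$ with $q_j$ quadratic forms; it has rank at least $r$ if, with $\beta_j$ the bilinear form of $q_j$, the bilinear form $\sum_j\lambda_j\beta_j$ has rank at least $r$ for every $(\lambda_1,\dots,\lambda_{d_2})\in\mathbb{F}_p^{d_2}\setminus\{0\}$. *)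

theory Defs
  imports "Jordan_Normal_Form.DL_Rank" "HOL-Computational_Algebra.Primes"
begin

text \<open>F_p is modelled as an arbitrary field type 'a with CARD('a) = p prime
(every field with p elements is F_p).
A d-tuple of vectors (an element of (F_p^n)^d) is a function nat => 'a vec whose
entries at indices < d lie in carrier_vec n and which is 0 at indices >= d.\<close>

definition tuple_space :: "nat \<Rightarrow> nat \<Rightarrow> (nat \<Rightarrow> 'a::field vec) set" where
  "tuple_space n d = {xs. (\<forall>r<d. xs r \<in> carrier_vec n) \<and> (\<forall>r\<ge>d. xs r = 0\<^sub>v n)}"

definition eval_form :: "nat \<Rightarrow> nat \<Rightarrow> (nat \<Rightarrow> 'a::field) \<Rightarrow> (nat \<Rightarrow> 'a vec) \<Rightarrow> 'a vec" where
  "eval_form n d g xs = finsum_vec TYPE('a) n (\<lambda>r. g r \<cdot>\<^sub>v xs r) {0..<d}"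

text \<open>Square-independence of the system (L_1..L_m), L_i having coefficients gamma i r:
the d x d matrices (gamma i r * gamma i s) are linearly independent.\<close>
definition square_independent :: "nat \<Rightarrow> nat \<Rightarrow> (nat \<Rightarrow> nat \<Rightarrow> 'a::field) \<Rightarrow> bool" where
  "square_independent m d gamma \<longleftrightarrow>
     (\<forall>c::nat \<Rightarrow> 'a. (\<forall>r<d. \<forall>s<d. (\<Sum>i<m. c i * (gamma i r * gamma i s)) = 0)
        \<longrightarrow> (\<forall>i<m. c i = 0))"

definition qform :: "'a::field mat \<Rightarrow> 'a vec \<Rightarrow> 'a" where
  "qform M x = x \<bullet> (M *\<^sub>v x)"

definition assoc_bilin :: "'a::field mat \<Rightarrow> 'a vec \<Rightarrow> 'a vec \<Rightarrow> 'a" where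
  "assoc_bilin M x y = (qform M (x + y) - qform M x - qform M y) / 2"

definition quadratic_form_matrix :: "nat \<Rightarrow> 'a::field mat \<Rightarrow> bool" where
  "quadratic_form_matrix n M \<longleftrightarrow> M \<in> carrier_mat n n \<and> transpose_mat M = M"

definition bilin_rank :: "nat \<Rightarrow> ('a::field vec \<Rightarrow> 'a vec \<Rightarrow> 'a) \<Rightarrow> nat" where
  "bilin_rank n B = vec_space.rank n (mat n n (\<lambda>(a, b). B (unit_vec n a) (unit_vec n b)))"

definition quad_map_rank_ge :: "nat \<Rightarrow> nat \<Rightarrow> (nat \<Rightarrow> 'a::field mat) \<Rightarrow> nat \<Rightarrow> bool" where
  "quad_map_rank_ge n d2 Ms r \<longleftrightarrow>
     (\<forall>lam::nat \<Rightarrow> 'a. (\<exists>j<d2. lam j \<noteq> 0) \<longrightarrow>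
        bilin_rank n (\<lambda>x y. \<Sum>j<d2. lam j * assoc_bilin (Ms j) x y) \<ge> r)"

definition quad_map :: "nat \<Rightarrow> (nat \<Rightarrow> 'a::field mat) \<Rightarrow> 'a vec \<Rightarrow> 'a vec" where
  "quad_map d2 Ms x = vec d2 (\<lambda>j. qform (Ms j) x)"

definition tuple_linear :: "nat \<Rightarrow> nat \<Rightarrow> nat \<Rightarrow> ((nat \<Rightarrow> 'a::field vec) \<Rightarrow> 'a vec) \<Rightarrow> bool" where
  "tuple_linear n d d2 f \<longleftrightarrow>
     (\<forall>xs\<in>tuple_space n d. f xs \<in> carrier_vec d2) \<and>
     (\<forall>xs\<in>tuple_space n d. \<forall>ys\<in>tuple_space n d. f (\<lambda>r. xs r + ys r) = f xs + f ys) \<and>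
     (\<forall>c. \<forall>xs\<in>tuple_space n d. f (\<lambda>r. c \<cdot>\<^sub>v xs r) = c \<cdot>\<^sub>v f xs)"

end

theory Submission
  imports Defs "HOL-Number_Theory.Residues"
begin

definition idx :: "'a::{field,finite} \<Rightarrow> nat" where
  "idx x = (SOME k. k < (card (UNIV::'a set)) \<and> of_nat k = x)"

definition chi :: "'a::{field,finite} \<Rightarrow> complex" where
  "chi x = cis (2 * pi * real (idx x) / real (card (UNIV::'a set)))"

lemma CHAR_eq_card:
  assumes "prime (card (UNIV::'a::{field,finite} set))"
  shows "CHAR('a) = (card (UNIV::'a set))"
proof -
  have pos: "CHAR('a) > 0" by (rule finite_imp_CHAR_pos) simp
  have "prime CHAR('a)" by (rule prime_CHAR_semidom[OF pos])
  moreover have "CHAR('a) dvd (card (UNIV::'a set))" by (rule CHAR_dvd_CARD)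
  ultimately show ?thesis using assms by (metis primes_dvd_imp_eq)
qed

lemma idx_ex:
  assumes "prime (card (UNIV::'a::{field,finite} set))"
  shows "\<exists>k. k < (card (UNIV::'a set)) \<and> of_nat k = (x::'a)"
proof -
  have inj: "inj_on (of_nat :: nat \<Rightarrow> 'a) {..<(card (UNIV::'a set))}"
    by (intro inj_onI) (auto simp: of_nat_eq_iff_cong_CHAR CHAR_eq_card[OF assms] cong_def)
  have "card ((of_nat :: nat \<Rightarrow> 'a) ` {..<(card (UNIV::'a set))}) = (card (UNIV::'a set))"
    using card_image[OF inj] by simp
  hence "(of_nat :: nat \<Rightarrow> 'a) ` {..<(card (UNIV::'a set))} = UNIV"
    by (simp add: card_subset_eq)
  thus ?thesis by (metis UNIV_I imageE lessThan_iff)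
qed

lemma idx:
  assumes "prime (card (UNIV::'a::{field,finite} set))"
  shows "idx (x::'a) < (card (UNIV::'a set))" "of_nat (idx x) = x"
  using someI_ex[OF idx_ex[OF assms, of x]] unfolding idx_def by auto

lemma cis_mod:
  assumes "(k::nat) mod p = l mod p" "p > 0"
  shows "cis (2 * pi * real k / real p) = cis (2 * pi * real l / real p)"
proof -
  have k: "real k = real (k mod p) + real (k div p) * real p"
    by (metis mod_div_mult_eq of_nat_add of_nat_mult add.commute)
  have l: "real l = real (l mod p) + real (l div p) * real p"
    by (metis mod_div_mult_eq of_nat_add of_nat_mult add.commute)
  have "\<And>q::nat. \<And>t. cis (2 * pi * (t + real q * real p) / real p) = cis (2 * pi * t / real p)"
  proof -
    fix q :: nat and t
    have "2 * pi * (t + real q * real p) / real p = 2 * pi * t / real p + 2 * pi * real q"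
      using assms(2) by (simp add: field_simps)
    thus "cis (2 * pi * (t + real q * real p) / real p) = cis (2 * pi * t / real p)"
      by (simp add: cis_mult[symmetric])
  qed
  thus ?thesis by (metis k l assms(1))
qed

lemma chi_add:
  assumes "prime (card (UNIV::'a::{field,finite} set))"
  shows "chi ((x::'a) + y) = chi x * chi y"
proof -
  have "of_nat (idx (x + y)) = (of_nat (idx x + idx y) :: 'a)"
    using idx[OF assms] by simp
  hence "[idx (x + y) = idx x + idx y] (mod CHAR('a))" by (simp only: of_nat_eq_iff_cong_CHAR)
  hence "idx (x + y) mod (card (UNIV::'a set)) = (idx x + idx y) mod (card (UNIV::'a set))"
    by (simp add: CHAR_eq_card[OF assms] cong_def)
  hence "chi (x + y) = cis (2 * pi * real (idx x + idx y) / real (card (UNIV::'a set)))"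
    unfolding chi_def using cis_mod by (metis assms prime_gt_0_nat)
  also have "\<dots> = chi x * chi y" unfolding chi_def
    by (simp add: cis_mult[symmetric] add_divide_distrib distrib_left)
  finally show ?thesis .
qed

lemma chi_zero:
  assumes "prime (card (UNIV::'a::{field,finite} set))"
  shows "chi (0::'a) = 1"
proof -
  have "chi (0::'a) = chi (0::'a) * chi (0::'a)" using chi_add[OF assms, of 0 0] by (simp only: add_0_left)
  moreover have "chi (0::'a) \<noteq> 0" unfolding chi_def by (metis cis_neq_zero)
  ultimately show ?thesis by (metis mult_cancel_left1)
qed

lemma norm_chi [simp]: "norm (chi x) = 1"
  unfolding chi_def by simp

lemma chi_neg:
  assumes "prime (card (UNIV::'a::{field,finite} set))"
  shows "chi (- (x::'a)) = cnj (chi x)"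
proof -
  have "chi (- x) * chi x = 1" using chi_add[OF assms, of "-x" x] chi_zero[OF assms] by simp
  moreover have "cnj (chi x) * chi x = 1"
    using complex_norm_square[of "chi x"] by (simp add: mult.commute)
  moreover have "chi x \<noteq> 0" using norm_chi[of x] by (metis norm_zero zero_neq_one)
  ultimately show ?thesis by (metis mult_cancel_right)
qed

lemma chi_one_iff:
  assumes "prime (card (UNIV::'a::{field,finite} set))"
  shows "chi (x::'a) = 1 \<longleftrightarrow> x = 0"
proof
  assume "x = 0" thus "chi x = 1" using chi_zero[OF assms] by simp
next
  assume h: "chi x = 1"
  let ?p = "real (card (UNIV::'a set))"
  have pp: "?p > 0" using assms prime_gt_0_nat by simp
  from h have "cos (2 * pi * real (idx x) / ?p) = 1" unfolding chi_def
    by (metis cis.sel(1) one_complex.sel(1))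
  then obtain i :: int where i: "2 * pi * real (idx x) / ?p = 2 * pi * real_of_int i"
    by (metis cos_one_2pi_int mult.commute mult.left_commute)
  hence "real (idx x) = ?p * real_of_int i" using pp by (simp add: field_simps)
  moreover have "real (idx x) < ?p" using idx(1)[OF assms, of x] by simp
  ultimately have "i < 1" using pp by (smt (verit) mult_le_cancel_left1 of_int_less_1_iff)
  moreover have "i \<ge> 0" using \<open>real (idx x) = ?p * real_of_int i\<close> pp
    by (smt (verit) of_nat_0_le_iff zero_le_mult_iff of_int_0_le_iff)
  ultimately have "i = 0" by linarith
  hence "idx x = 0" using \<open>real (idx x) = ?p * real_of_int i\<close> by simp
  thus "x = 0" using idx(2)[OF assms, of x] by simp
qed

lemma chi_diff:
  assumes p: "prime (card (UNIV::'a::{field,finite} set))"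
  shows "chi ((x::'a) - y) = chi x * cnj (chi y)"
  using chi_add[OF p, of x "- y"] chi_neg[OF p, of y] by simp

lemma char_sum_zero:
  fixes X :: "'b set" and add :: "'b \<Rightarrow> 'b \<Rightarrow> 'b" and l :: "'b \<Rightarrow> 'a::{field,finite}"
  assumes p: "prime (card (UNIV::'a set))"
    and fin: "finite X"
    and bij: "bij_betw (add zz) X X" and zz: "zz \<in> X"
    and ladd: "\<And>x. x \<in> X \<Longrightarrow> l (add zz x) = l zz + l x"
    and nz: "l zz \<noteq> 0"
  shows "(\<Sum>x\<in>X. chi (l x)) = 0"
proof -
  have "(\<Sum>x\<in>X. chi (l x)) = (\<Sum>x\<in>X. chi (l (add zz x)))"
    using sum.reindex_bij_betw[OF bij, of "\<lambda>y. chi (l y)"] by simp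
  also have "\<dots> = chi (l zz) * (\<Sum>x\<in>X. chi (l x))"
    by (simp add: ladd chi_add[OF p] sum_distrib_left)
  finally have "(1 - chi (l zz)) * (\<Sum>x\<in>X. chi (l x)) = 0" by (simp add: algebra_simps)
  moreover have "1 - chi (l zz) \<noteq> 0" using chi_one_iff[OF p] nz by simp
  ultimately show ?thesis by simp
qed

lemma char_sum_field:
  assumes p: "prime (card (UNIV::'a::{field,finite} set))"
  shows "(\<Sum>t\<in>UNIV. chi (t * (v::'a))) = (if v = 0 then of_nat (card (UNIV::'a set)) else 0)"
proof (cases "v = 0")
  case True thus ?thesis by (simp add: chi_zero[OF p])
next
  case False
  have "(\<Sum>t\<in>UNIV. chi (t * v)) = 0"
    by (rule char_sum_zero[OF p, of UNIV "(+)" 1]) (auto simp: bij_betw_def inj_on_def False algebra_simps)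
  thus ?thesis using False by simp
qed

lemma chi_sum:
  assumes p: "prime (card (UNIV::'a::{field,finite} set))" and "finite I"
  shows "chi (\<Sum>k\<in>I. (f k :: 'a)) = (\<Prod>k\<in>I. chi (f k))"
  using assms(2) by (induction I rule: finite_induct) (auto simp: chi_zero[OF p] chi_add[OF p])

lemma fourier_inv:
  assumes p: "prime (card (UNIV::'a::{field,finite} set))" and fin: "finite I"
  shows "(\<Sum>lam\<in>PiE I (\<lambda>_. UNIV). chi (\<Sum>k\<in>I. lam k * (v k :: 'a)))
         = (if \<forall>k\<in>I. v k = 0 then of_nat (card (UNIV::'a set)) ^ card I else 0)"
proof -
  have "(\<Sum>lam\<in>PiE I (\<lambda>_. UNIV). chi (\<Sum>k\<in>I. lam k * v k))
      = (\<Sum>lam\<in>PiE I (\<lambda>_. UNIV). \<Prod>k\<in>I. chi (lam k * v k))"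
    using chi_sum[OF p fin] by simp
  also have "\<dots> = (\<Prod>k\<in>I. \<Sum>t\<in>UNIV. chi (t * v k))"
    by (rule prod_sum_PiE[symmetric]) (auto simp: fin)
  also have "\<dots> = (\<Prod>k\<in>I. (if v k = 0 then of_nat (card (UNIV::'a set)) else 0))"
    using char_sum_field[OF p] by simp
  also have "\<dots> = (if \<forall>k\<in>I. v k = 0 then of_nat (card (UNIV::'a set)) ^ card I else 0)"
    using fin by (auto simp: prod_zero_iff)
  finally show ?thesis .
qed

lemma gauss_bound:
  fixes X :: "'b set" and add :: "'b \<Rightarrow> 'b \<Rightarrow> 'b"
    and f c :: "'b \<Rightarrow> 'a::{field,finite}" and B :: "'b \<Rightarrow> 'b \<Rightarrow> 'a"
  assumes p: "prime (card (UNIV::'a set))"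
    and fin: "finite X"
    and bij: "\<And>u. u \<in> X \<Longrightarrow> bij_betw (add u) X X"
    and comm: "\<And>u v. u \<in> X \<Longrightarrow> v \<in> X \<Longrightarrow> add u v = add v u"
    and feq: "\<And>u h. u \<in> X \<Longrightarrow> h \<in> X \<Longrightarrow> f (add u h) - f u = B u h + c h"
    and Badd: "\<And>u u' h. u \<in> X \<Longrightarrow> u' \<in> X \<Longrightarrow> h \<in> X \<Longrightarrow> B (add u u') h = B u h + B u' h"
  shows "(norm (\<Sum>u\<in>X. chi (f u)))^2 \<le> real (card X) * real (card {h\<in>X. \<forall>u\<in>X. B u h = 0})"
proof -
  let ?S = "\<Sum>u\<in>X. chi (f u)"
  let ?R = "{h\<in>X. \<forall>u\<in>X. B u h = 0}"
  have inner: "(\<Sum>u\<in>X. chi (B u h)) = (if h \<in> ?R then of_nat (card X) else 0)" if h: "h \<in> X" for h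
  proof (cases "h \<in> ?R")
    case True thus ?thesis by (simp add: chi_zero[OF p])
  next
    case False
    then obtain u0 where u0: "u0 \<in> X" "B u0 h \<noteq> 0" using h by auto
    have "(\<Sum>u\<in>X. chi (B u h)) = 0"
      by (rule char_sum_zero[where add=add and zz=u0 and l="\<lambda>u. B u h", OF p fin bij[OF u0(1)] u0(1)]) (use Badd h u0 in auto)
    thus ?thesis by (simp only: if_not_P[OF False])
  qed
  have "of_real ((norm ?S)^2) = ?S * cnj ?S" by (rule complex_norm_square)
  also have "\<dots> = (\<Sum>u\<in>X. \<Sum>v\<in>X. chi (f u) * cnj (chi (f v)))"
    by (simp add: cnj_sum sum_product)
  also have "\<dots> = (\<Sum>u\<in>X. \<Sum>v\<in>X. chi (f u - f v))"
    by (simp add: chi_diff[OF p])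
  also have "\<dots> = (\<Sum>v\<in>X. \<Sum>u\<in>X. chi (f u - f v))"
    by (rule sum.swap)
  also have "\<dots> = (\<Sum>u\<in>X. \<Sum>h\<in>X. chi (f (add u h) - f u))"
  proof (rule sum.cong[OF refl])
    fix u assume u: "u \<in> X"
    show "(\<Sum>v\<in>X. chi (f v - f u)) = (\<Sum>h\<in>X. chi (f (add u h) - f u))"
      using sum.reindex_bij_betw[OF bij[OF u], of "\<lambda>v. chi (f v - f u)"] by simp
  qed
  also have "\<dots> = (\<Sum>u\<in>X. \<Sum>h\<in>X. chi (c h) * chi (B u h))"
    by (intro sum.cong refl) (simp add: feq chi_add[OF p] mult.commute)
  also have "\<dots> = (\<Sum>h\<in>X. chi (c h) * (\<Sum>u\<in>X. chi (B u h)))"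
    by (subst sum.swap) (simp add: sum_distrib_left)
  also have "\<dots> = (\<Sum>h\<in>X. chi (c h) * (if h \<in> ?R then of_nat (card X) else 0))"
    by (intro sum.cong refl) (simp add: inner)
  finally have eq: "of_real ((norm ?S)^2) = (\<Sum>h\<in>X. chi (c h) * (if h \<in> ?R then of_nat (card X) else 0))" .
  have "(norm ?S)^2 = norm (of_real ((norm ?S)^2) :: complex)"
    by (simp only: norm_of_real abs_of_nonneg[OF zero_le_power2])
  also have "\<dots> \<le> (\<Sum>h\<in>X. norm (chi (c h) * (if h \<in> ?R then of_nat (card X) else (0::complex))))"
    unfolding eq by (rule norm_sum)
  also have "\<dots> = (\<Sum>h\<in>X. (if h \<in> ?R then real (card X) else 0))"
    by (intro sum.cong refl) (simp add: norm_mult)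
  also have "\<dots> = real (card X) * real (card ?R)"
    using fin by (simp add: sum.If_cases Int_def)
  finally show ?thesis .
qed

lemma rank_inj:
  fixes G :: "'a::{field,finite} mat"
  assumes G: "G \<in> carrier_mat n n" and rk: "vec_space.rank n G \<ge> r"
  shows "\<exists>T \<subseteq> carrier_vec n. card (UNIV::'a set) ^ r \<le> card T \<and> inj_on (\<lambda>w. G *\<^sub>v w) T"
proof -
  interpret vec_space "TYPE('a)" n .
  let ?P = "\<lambda>T. T \<subseteq> set (cols G) \<and> lin_indpt T"
  have P0: "?P {}" unfolding lin_dep_def by auto
  obtain S where fS: "finite S" and max: "maximal S ?P"
    using maximal_exists_superset[of "set (cols G)" ?P "{}", OF _ _ P0] by auto
  have rkS: "rank G = card S" by (rule rank_card_indpt[OF G max])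
  have Scols: "S \<subseteq> set (cols G)" and li: "lin_indpt S" using max unfolding maximal_def by auto
  have Scar: "S \<subseteq> carrier_vec n" using Scols G cols_dim by blast
  define kk where "kk s = (SOME k. k < n \<and> s = col G k)" for s
  have kk: "kk s < n \<and> s = col G (kk s)" if "s \<in> S" for s
  proof -
    have "s \<in> col G ` {0..<n}" using Scols that G unfolding cols_def by auto
    then obtain k where "k \<in> {0..<n}" "s = col G k" by blast
    hence "\<exists>k. k < n \<and> s = col G k" by auto
    thus ?thesis unfolding kk_def by (rule someI_ex)
  qed
  define W where "W c = vec n (\<lambda>k. \<Sum>s\<in>{s\<in>S. kk s = k}. c s)" for c :: "'a vec \<Rightarrow> 'a"
  have GW: "G *\<^sub>v W c = lincomb c S" for c
  proof (rule eq_vecI)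
    show "dim_vec (G *\<^sub>v W c) = dim_vec (lincomb c S)" using G lincomb_dim[OF fS Scar] by simp
    fix i assume "i < dim_vec (lincomb c S)"
    hence i: "i < n" using lincomb_dim[OF fS Scar] by simp
    have "(G *\<^sub>v W c) $ i = (\<Sum>k<n. G $$ (i, k) * (\<Sum>s\<in>{s\<in>S. kk s = k}. c s))"
      using G i unfolding W_def by (simp add: scalar_prod_def lessThan_atLeast0)
    also have "\<dots> = (\<Sum>k<n. \<Sum>s\<in>{s\<in>S. kk s = k}. c s * G $$ (i, kk s))"
      by (intro sum.cong refl) (auto simp: sum_distrib_left mult.commute)
    also have "\<dots> = (\<Sum>s\<in>S. c s * G $$ (i, kk s))"
      by (rule sum.group[OF fS]) (use kk in auto)
    also have "\<dots> = (\<Sum>s\<in>S. c s * s $ i)"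
      by (intro sum.cong refl) (metis G carrier_matD kk i col_def index_vec)
    also have "\<dots> = lincomb c S $ i" using lincomb_index[OF i Scar] by simp
    finally show "(G *\<^sub>v W c) $ i = lincomb c S $ i" .
  qed
  have lc_inj: "c = c'" if c: "c \<in> PiE S (\<lambda>_. UNIV)" and c': "c' \<in> PiE S (\<lambda>_. UNIV)"
    and eq: "lincomb c S = lincomb c' S" for c c'
  proof -
    have z: "lincomb (\<lambda>s. c s - c' s) S = 0\<^sub>v n"
    proof (rule eq_vecI)
      fix i assume "i < dim_vec (0\<^sub>v n)"
      hence i: "i < n" by simp
      have "lincomb (\<lambda>s. c s - c' s) S $ i = (\<Sum>s\<in>S. c s * s $ i) - (\<Sum>s\<in>S. c' s * s $ i)"
        using lincomb_index[OF i Scar] by (simp add: sum_subtractf left_diff_distrib)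
      also have "\<dots> = 0" using eq lincomb_index[OF i Scar, of c] lincomb_index[OF i Scar, of c'] by simp
      finally show "lincomb (\<lambda>s. c s - c' s) S $ i = 0\<^sub>v n $ i" using i by simp
    qed (use lincomb_dim[OF fS Scar] in simp)
    have "\<forall>v\<in>S. c v - c' v = 0"
    proof (rule ccontr)
      assume "\<not> ?thesis"
      then obtain v where "v \<in> S" "c v - c' v \<noteq> 0" by auto
      hence "lin_dep S" unfolding lin_dep_def using fS z
        by (intro exI[of _ S] exI[of _ "\<lambda>s. c s - c' s"] exI[of _ v]) auto
      thus False using li by simp
    qed
    thus ?thesis using c c' by (auto simp: PiE_iff extensional_def intro!: ext)
  qed
  define T where "T = W ` PiE S (\<lambda>_. UNIV)"
  have injG: "c = c'" if "c \<in> PiE S (\<lambda>_. UNIV)" "c' \<in> PiE S (\<lambda>_. UNIV)"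
    "G *\<^sub>v W c = G *\<^sub>v W c'" for c c'
    using lc_inj[OF that(1,2)] that(3) unfolding GW by simp
  have injW: "inj_on W (PiE S (\<lambda>_. UNIV))"
    by (rule inj_onI) (use injG in simp)
  have "T \<subseteq> carrier_vec n" unfolding T_def W_def by auto
  moreover have "inj_on (\<lambda>w. G *\<^sub>v w) T"
    unfolding T_def
  proof (rule inj_onI)
    fix x y assume "x \<in> W ` PiE S (\<lambda>_. UNIV)" "y \<in> W ` PiE S (\<lambda>_. UNIV)" "G *\<^sub>v x = G *\<^sub>v y"
    then obtain c c' where "c \<in> PiE S (\<lambda>_. UNIV)" "c' \<in> PiE S (\<lambda>_. UNIV)" "x = W c" "y = W c'"
      "G *\<^sub>v W c = G *\<^sub>v W c'" by blast
    thus "x = y" using injG by blast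
  qed
  moreover have "card T = card (UNIV::'a set) ^ card S"
    unfolding T_def using card_image[OF injW] fS by (simp add: card_PiE)
  moreover have "card (UNIV::'a set) ^ r \<le> card (UNIV::'a set) ^ card S"
  proof (rule power_increasing)
    show "r \<le> card S" using rk rkS by simp
    have "card (UNIV::'a set) > 0" by (simp add: card_gt_0_iff)
    thus "1 \<le> card (UNIV::'a set)" by simp
  qed
  ultimately show ?thesis by auto
qed

definition tadd :: "(nat \<Rightarrow> 'a::field vec) \<Rightarrow> (nat \<Rightarrow> 'a vec) \<Rightarrow> nat \<Rightarrow> 'a vec" where
  "tadd xs ys = (\<lambda>r. xs r + ys r)"

lemma ts_iff: "xs \<in> tuple_space n d \<longleftrightarrow> (\<forall>r<d. xs r \<in> carrier_vec n) \<and> (\<forall>r\<ge>d. xs r = 0\<^sub>v n)"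
  unfolding tuple_space_def by simp

lemma ts_carrier: "xs \<in> tuple_space n d \<Longrightarrow> xs r \<in> carrier_vec n"
  unfolding ts_iff by (cases "r < d") auto

lemma ts_dim: "xs \<in> tuple_space n d \<Longrightarrow> dim_vec (xs r) = n"
  using ts_carrier by (metis carrier_vecD)

lemma tadd_closed: "xs \<in> tuple_space n d \<Longrightarrow> ys \<in> tuple_space n d \<Longrightarrow> tadd xs ys \<in> tuple_space n d"
  unfolding ts_iff tadd_def by auto

lemma tadd_comm: "xs \<in> tuple_space n d \<Longrightarrow> ys \<in> tuple_space n d \<Longrightarrow> tadd xs ys = tadd ys xs"
  unfolding tadd_def by (intro ext comm_add_vec) (auto intro: ts_carrier)

lemma tsub_closed: "xs \<in> tuple_space n d \<Longrightarrow> ys \<in> tuple_space n d \<Longrightarrow> (\<lambda>r. xs r - ys r) \<in> tuple_space n d"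
  unfolding ts_iff by auto

lemma tadd_bij:
  fixes u :: "nat \<Rightarrow> 'a::field vec"
  assumes u: "u \<in> tuple_space n d"
  shows "bij_betw (tadd u) (tuple_space n d) (tuple_space n d)"
proof (rule bij_betwI[where g = "\<lambda>v r. v r - u r"])
  show "tadd u \<in> tuple_space n d \<rightarrow> tuple_space n d" using tadd_closed[OF u] by auto
  show "(\<lambda>v r. v r - u r) \<in> tuple_space n d \<rightarrow> tuple_space n d" using tsub_closed u by auto
  fix x :: "nat \<Rightarrow> 'a vec" assume x: "x \<in> tuple_space n d"
  show "(\<lambda>r. tadd u x r - u r) = x" unfolding tadd_def
  proof (rule ext, rule eq_vecI)
    fix r i assume "i < dim_vec (x r)"
    thus "(u r + x r - u r) $ i = x r $ i" using ts_carrier[OF x, of r] ts_carrier[OF u, of r] by auto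
  qed (metis carrier_vecD ts_carrier x u index_add_vec(2) index_minus_vec(2))
next
  fix x :: "nat \<Rightarrow> 'a vec" assume x: "x \<in> tuple_space n d"
  show "tadd u (\<lambda>r. x r - u r) = x" unfolding tadd_def
  proof (rule ext, rule eq_vecI)
    fix r i assume "i < dim_vec (x r)"
    thus "(u r + (x r - u r)) $ i = x r $ i" using ts_carrier[OF x, of r] ts_carrier[OF u, of r] by auto
  qed (metis carrier_vecD ts_carrier x u index_add_vec(2) index_minus_vec(2))
qed

lemma finite_carrier_vec: "finite (carrier_vec n :: 'a::finite vec set)"
proof -
  have "carrier_vec n \<subseteq> (\<lambda>f. vec n f) ` PiE {..<n} (\<lambda>_. (UNIV :: 'a set))"
  proof
    fix v :: "'a vec" assume v: "v \<in> carrier_vec n"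
    have "v = vec n (restrict (($) v) {..<n})"
    proof (rule eq_vecI)
      show "dim_vec v = dim_vec (vec n (restrict (($) v) {..<n}))" using v by simp
      fix i assume "i < dim_vec (vec n (restrict (($) v) {..<n}))"
      thus "v $ i = vec n (restrict (($) v) {..<n}) $ i" by simp
    qed
    moreover have "restrict (($) v) {..<n} \<in> PiE {..<n} (\<lambda>_. UNIV)" by simp
    ultimately show "v \<in> (\<lambda>f. vec n f) ` PiE {..<n} (\<lambda>_. UNIV)" by (rule image_eqI)
  qed
  moreover have "finite ((\<lambda>f. vec n f) ` PiE {..<n} (\<lambda>_. (UNIV :: 'a set)))"
    by (rule finite_imageI, rule finite_PiE) auto
  ultimately show ?thesis by (rule finite_subset)
qed

lemma finite_ts: "finite (tuple_space n d :: (nat \<Rightarrow> 'a::{field,finite} vec) set)"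
proof -
  let ?E = "\<lambda>g r. if r < d then g r else 0\<^sub>v n"
  have "tuple_space n d \<subseteq> ?E ` PiE {..<d} (\<lambda>_. carrier_vec n :: 'a vec set)"
  proof
    fix xs :: "nat \<Rightarrow> 'a vec" assume xs: "xs \<in> tuple_space n d"
    have "xs = ?E (restrict xs {..<d})"
    proof
      fix r show "xs r = ?E (restrict xs {..<d}) r" using xs unfolding ts_iff by (cases "r < d") auto
    qed
    moreover have "restrict xs {..<d} \<in> PiE {..<d} (\<lambda>_. carrier_vec n)" using xs unfolding ts_iff by auto
    ultimately show "xs \<in> ?E ` PiE {..<d} (\<lambda>_. carrier_vec n)" by (rule image_eqI)
  qed
  moreover have "finite (?E ` PiE {..<d} (\<lambda>_. carrier_vec n :: 'a vec set))"
    by (rule finite_imageI, rule finite_PiE) (auto simp: finite_carrier_vec)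
  ultimately show ?thesis by (rule finite_subset)
qed

lemma zero_ts: "(\<lambda>_. 0\<^sub>v n) \<in> tuple_space n d"
  unfolding ts_iff by auto

lemma ef_carrier: "eval_form n d g xs \<in> carrier_vec n" if "xs \<in> tuple_space n d"
  unfolding eval_form_def by (rule finsum_vec_closed) (use ts_carrier[OF that] in auto)

lemma ef_dim: "xs \<in> tuple_space n d \<Longrightarrow> dim_vec (eval_form n d g xs) = n"
  using ef_carrier by (metis carrier_vecD)

lemma ef_index:
  assumes xs: "xs \<in> tuple_space n d" and a: "a < n"
  shows "eval_form n d g xs $ a = (\<Sum>r\<in>{0..<d}. g r * xs r $ a)"
proof -
  have "eval_form n d g xs $ a = (\<Sum>r\<in>{0..<d}. (g r \<cdot>\<^sub>v xs r) $ a)"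
    unfolding eval_form_def by (rule index_finsum_vec) (use ts_carrier[OF xs] a in auto)
  also have "\<dots> = (\<Sum>r\<in>{0..<d}. g r * xs r $ a)"
    by (intro sum.cong refl) (metis a carrier_vecD index_smult_vec(1) ts_carrier[OF xs])
  finally show ?thesis .
qed

lemma ef_add:
  assumes "xs \<in> tuple_space n d" "ys \<in> tuple_space n d"
  shows "eval_form n d g (tadd xs ys) = eval_form n d g xs + eval_form n d g ys"
proof (rule eq_vecI)
  have t: "tadd xs ys \<in> tuple_space n d" using tadd_closed assms .
  fix a assume "a < dim_vec (eval_form n d g xs + eval_form n d g ys)"
  hence a: "a < n" by (metis carrier_vecD index_add_vec(2) ef_carrier assms(2))
  show "eval_form n d g (tadd xs ys) $ a = (eval_form n d g xs + eval_form n d g ys) $ a"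
    using assms a t by (simp add: ef_index ef_dim ts_dim tadd_def distrib_left sum.distrib)
qed (simp add: ef_dim[OF tadd_closed[OF assms]] ef_dim[OF assms(2)])

definition single :: "nat \<Rightarrow> nat \<Rightarrow> 'a::field vec \<Rightarrow> nat \<Rightarrow> 'a vec" where
  "single n r0 y = (\<lambda>r. if r = r0 then y else 0\<^sub>v n)"

lemma single_ts: "r0 < d \<Longrightarrow> y \<in> carrier_vec n \<Longrightarrow> single n r0 y \<in> tuple_space n d"
  unfolding ts_iff single_def by auto

lemma ef_single:
  assumes "r0 < d" "y \<in> carrier_vec n"
  shows "eval_form n d g (single n r0 y) = g r0 \<cdot>\<^sub>v y"
proof (rule eq_vecI)
  fix a assume "a < dim_vec (g r0 \<cdot>\<^sub>v y)"
  hence a: "a < n" using assms by simp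
  have "eval_form n d g (single n r0 y) $ a = (\<Sum>r\<in>{0..<d}. g r * single n r0 y r $ a)"
    using single_ts[OF assms] a by (simp add: ef_index)
  also have "\<dots> = (\<Sum>r\<in>{0..<d}. (if r = r0 then g r * y $ a else 0))"
    by (intro sum.cong refl) (simp add: single_def a)
  also have "\<dots> = g r0 * y $ a" using assms(1) by simp
  finally show "eval_form n d g (single n r0 y) $ a = (g r0 \<cdot>\<^sub>v y) $ a" using a assms by simp
qed (simp add: ef_dim[OF single_ts[OF assms]] carrier_vecD[OF assms(2)])

definition bil :: "nat \<Rightarrow> 'a::field mat \<Rightarrow> 'a vec \<Rightarrow> 'a vec \<Rightarrow> 'a" where
  "bil n M v w = (\<Sum>a<n. \<Sum>b<n. v $ a * M $$ (a, b) * w $ b)"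

lemma mult_index: "M \<in> carrier_mat n n \<Longrightarrow> w \<in> carrier_vec n \<Longrightarrow> a < n \<Longrightarrow> (M *\<^sub>v w) $ a = (\<Sum>b<n. M $$ (a, b) * w $ b)"
  by (simp add: scalar_prod_def atLeast0LessThan)

lemma bil_mult: "M \<in> carrier_mat n n \<Longrightarrow> w \<in> carrier_vec n \<Longrightarrow> bil n M v w = (\<Sum>a<n. v $ a * (M *\<^sub>v w) $ a)"
  unfolding bil_def by (intro sum.cong refl) (simp add: scalar_prod_def atLeast0LessThan sum_distrib_left mult.assoc)

lemma qform_bil: "M \<in> carrier_mat n n \<Longrightarrow> v \<in> carrier_vec n \<Longrightarrow> qform M v = bil n M v v"
  unfolding qform_def by (simp add: bil_mult scalar_prod_def atLeast0LessThan)

lemma bil_add1: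
  assumes "v \<in> carrier_vec n" "w \<in> carrier_vec n"
  shows "bil n M (v + w) z = bil n M v z + bil n M w z"
proof -
  have "bil n M (v + w) z = (\<Sum>a<n. \<Sum>b<n. v $ a * M $$ (a, b) * z $ b + w $ a * M $$ (a, b) * z $ b)"
    unfolding bil_def by (intro sum.cong refl) (use assms in \<open>simp add: distrib_right\<close>)
  thus ?thesis by (simp add: sum.distrib bil_def)
qed

lemma bil_add2:
  assumes "v \<in> carrier_vec n" "w \<in> carrier_vec n"
  shows "bil n M z (v + w) = bil n M z v + bil n M z w"
proof -
  have "bil n M z (v + w) = (\<Sum>a<n. \<Sum>b<n. z $ a * M $$ (a, b) * v $ b + z $ a * M $$ (a, b) * w $ b)"
    unfolding bil_def by (intro sum.cong refl) (use assms in \<open>simp add: distrib_left\<close>)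
  thus ?thesis by (simp add: sum.distrib bil_def)
qed

lemma bil_smult:
  assumes "v \<in> carrier_vec n" "w \<in> carrier_vec n"
  shows "bil n M (c \<cdot>\<^sub>v v) (e \<cdot>\<^sub>v w) = c * e * bil n M v w"
proof -
  have "bil n M (c \<cdot>\<^sub>v v) (e \<cdot>\<^sub>v w) = (\<Sum>a<n. \<Sum>b<n. c * e * (v $ a * M $$ (a, b) * w $ b))"
    unfolding bil_def by (intro sum.cong refl) (use assms in \<open>simp add: ac_simps\<close>)
  thus ?thesis by (simp add: sum_distrib_left bil_def)
qed

lemma bil_sym:
  assumes "M \<in> carrier_mat n n" "transpose_mat M = M"
  shows "bil n M v w = bil n M w v"
proof -
  have M: "M $$ (a, b) = M $$ (b, a)" if "a < n" "b < n" for a b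
    using assms that by (metis carrier_matD index_transpose_mat(1))
  have "bil n M v w = (\<Sum>b<n. \<Sum>a<n. v $ a * M $$ (a, b) * w $ b)"
    unfolding bil_def by (rule sum.swap)
  also have "\<dots> = bil n M w v" unfolding bil_def
    by (intro sum.cong refl) (auto simp: M mult.commute mult.left_commute)
  finally show ?thesis .
qed

lemma bil_unit1:
  assumes a: "a < n"
  shows "bil n M (unit_vec n a) w = (\<Sum>b<n. M $$ (a, b) * w $ b)"
proof -
  have "bil n M (unit_vec n a) w = (\<Sum>aa<n. if aa = a then (\<Sum>b<n. M $$ (a, b) * w $ b) else 0)"
    unfolding bil_def by (intro sum.cong refl) (use a in auto)
  also have "\<dots> = (\<Sum>b<n. M $$ (a, b) * w $ b)" using a by (simp add: sum.delta)
  finally show ?thesis .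
qed

lemma bil_unit: "a < n \<Longrightarrow> b < n \<Longrightarrow> bil n M (unit_vec n a) (unit_vec n b) = M $$ (a, b)"
  by (simp add: bil_unit1 if_distrib cong: if_cong)

lemma assoc_bilin_eq:
  fixes M :: "'a::field mat"
  assumes M: "M \<in> carrier_mat n n" "transpose_mat M = M" and two: "(2::'a) \<noteq> 0"
    and v: "v \<in> carrier_vec n" and w: "w \<in> carrier_vec n"
  shows "assoc_bilin M v w = bil n M v w"
proof -
  have "qform M (v + w) - qform M v - qform M w = bil n M v w + bil n M w v"
    using M v w by (simp add: qform_bil bil_add1 bil_add2)
  also have "\<dots> = 2 * bil n M v w" using bil_sym[OF M] by simp
  finally show ?thesis unfolding assoc_bilin_def using two by simp
qed

locale setting =
  fixes n d m d2 r :: nat and gamma :: "nat \<Rightarrow> nat \<Rightarrow> 'a::{field,finite}"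
    and Ms :: "nat \<Rightarrow> 'a mat" and phi :: "nat \<Rightarrow> (nat \<Rightarrow> 'a vec) \<Rightarrow> 'a vec" and b :: "nat \<Rightarrow> 'a vec"
  assumes prime: "prime (card (UNIV::'a set))" and odd: "odd (card (UNIV::'a set))"
    and sqi: "square_independent m d gamma"
    and qf: "\<forall>j<d2. quadratic_form_matrix n (Ms j)"
    and rkh: "quad_map_rank_ge n d2 Ms r"
    and lin: "\<forall>i<m. tuple_linear n d d2 (phi i)"
    and bc: "\<forall>i<m. b i \<in> carrier_vec d2"
begin

definition ell where "ell i xs = eval_form n d (gamma i) xs"
definition II where "II = {..<m} \<times> {..<d2}"
definition F where "F k xs = qform (Ms (snd k)) (ell (fst k) xs) - (phi (fst k) xs + b (fst k)) $ snd k"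
definition ff where "ff lam xs = (\<Sum>k\<in>II. lam k * F k xs)"
definition BB where "BB lam u h = (\<Sum>k\<in>II. lam k * (2 * bil n (Ms (snd k)) (ell (fst k) u) (ell (fst k) h)))"
definition cc where "cc lam h = (\<Sum>k\<in>II. lam k * (bil n (Ms (snd k)) (ell (fst k) h) (ell (fst k) h) - phi (fst k) h $ snd k))"

lemma two_nz: "(2::'a) \<noteq> 0"
proof
  assume "(2::'a) = 0"
  hence "(of_nat 2 :: 'a) = of_nat 0" by simp
  hence "[2 = 0] (mod CHAR('a))" by (simp only: of_nat_eq_iff_cong_CHAR)
  hence "card (UNIV::'a set) dvd 2" using CHAR_eq_card[OF prime] by (simp add: cong_0_iff)
  hence "card (UNIV::'a set) \<le> 2" by (simp add: dvd_imp_le)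
  moreover have "card (UNIV::'a set) \<ge> 2" using prime by (simp add: prime_ge_2_nat)
  ultimately have "card (UNIV::'a set) = 2" by simp
  thus False using odd by simp
qed

lemma Ms_car: "j < d2 \<Longrightarrow> Ms j \<in> carrier_mat n n"
  using qf unfolding quadratic_form_matrix_def by auto

lemma Ms_sym: "j < d2 \<Longrightarrow> transpose_mat (Ms j) = Ms j"
  using qf unfolding quadratic_form_matrix_def by auto

lemma ell_car: "xs \<in> tuple_space n d \<Longrightarrow> ell i xs \<in> carrier_vec n"
  unfolding ell_def by (rule ef_carrier)

lemma ell_add: "xs \<in> tuple_space n d \<Longrightarrow> ys \<in> tuple_space n d \<Longrightarrow> ell i (tadd xs ys) = ell i xs + ell i ys"
  unfolding ell_def by (rule ef_add)

lemma phi_car: "i < m \<Longrightarrow> xs \<in> tuple_space n d \<Longrightarrow> phi i xs \<in> carrier_vec d2"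
  using lin unfolding tuple_linear_def by auto

lemma phi_add: "i < m \<Longrightarrow> xs \<in> tuple_space n d \<Longrightarrow> ys \<in> tuple_space n d \<Longrightarrow> phi i (tadd xs ys) = phi i xs + phi i ys"
  using lin unfolding tuple_linear_def tadd_def by auto

lemma F_diff:
  assumes k: "k \<in> II" and u: "u \<in> tuple_space n d" and h: "h \<in> tuple_space n d"
  shows "F k (tadd u h) - F k u = 2 * bil n (Ms (snd k)) (ell (fst k) u) (ell (fst k) h)
           + (bil n (Ms (snd k)) (ell (fst k) h) (ell (fst k) h) - phi (fst k) h $ snd k)"
proof -
  obtain i j where kij: "k = (i, j)" and i: "i < m" and j: "j < d2" using k unfolding II_def by auto
  let ?M = "Ms j" and ?a = "ell i u" and ?c = "ell i h"
  have a: "?a \<in> carrier_vec n" and c: "?c \<in> carrier_vec n" using ell_car u h by auto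
  have q1: "qform ?M (ell i (tadd u h)) = bil n ?M ?a ?a + 2 * bil n ?M ?a ?c + bil n ?M ?c ?c"
  proof -
    have "qform ?M (ell i (tadd u h)) = bil n ?M (?a + ?c) (?a + ?c)"
      using ell_add[OF u h] qform_bil[OF Ms_car[OF j]] a c by simp
    also have "\<dots> = bil n ?M ?a ?a + bil n ?M ?a ?c + (bil n ?M ?c ?a + bil n ?M ?c ?c)"
      using a c by (simp add: bil_add1 bil_add2)
    also have "bil n ?M ?c ?a = bil n ?M ?a ?c" by (rule bil_sym[OF Ms_car[OF j] Ms_sym[OF j]])
    finally show ?thesis by simp
  qed
  have q2: "qform ?M ?a = bil n ?M ?a ?a" using qform_bil[OF Ms_car[OF j] a] .
  have bi: "dim_vec (b i) = d2" using bc i by auto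
  have d1: "dim_vec (phi i u) = d2" "dim_vec (phi i h) = d2"
    using phi_car[OF i u] phi_car[OF i h] by auto
  have p1: "(phi i (tadd u h) + b i) $ j = phi i u $ j + phi i h $ j + b i $ j"
    using phi_add[OF i u h] bi d1 j by simp
  have p2: "(phi i u + b i) $ j = phi i u $ j + b i $ j"
    using bi d1 j by simp
  show ?thesis unfolding F_def kij using q1 q2 p1 p2 by (simp add: algebra_simps)
qed

lemma feq:
  assumes u: "u \<in> tuple_space n d" and h: "h \<in> tuple_space n d"
  shows "ff lam (tadd u h) - ff lam u = BB lam u h + cc lam h"
proof -
  have "ff lam (tadd u h) - ff lam u = (\<Sum>k\<in>II. lam k * (F k (tadd u h) - F k u))"
    unfolding ff_def by (simp add: sum_subtractf[symmetric] right_diff_distrib)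
  also have "\<dots> = (\<Sum>k\<in>II. lam k * (2 * bil n (Ms (snd k)) (ell (fst k) u) (ell (fst k) h))
      + lam k * (bil n (Ms (snd k)) (ell (fst k) h) (ell (fst k) h) - phi (fst k) h $ snd k))"
    by (intro sum.cong refl) (simp add: F_diff[OF _ u h] distrib_left)
  also have "\<dots> = BB lam u h + cc lam h" unfolding BB_def cc_def by (rule sum.distrib)
  finally show ?thesis .
qed

lemma Badd1:
  assumes "u \<in> tuple_space n d" "u' \<in> tuple_space n d" "h \<in> tuple_space n d"
  shows "BB lam (tadd u u') h = BB lam u h + BB lam u' h"
  unfolding BB_def sum.distrib[symmetric]
  by (intro sum.cong refl) (simp add: ell_add assms bil_add1 ell_car algebra_simps)

lemma Badd2:
  assumes "u \<in> tuple_space n d" "h \<in> tuple_space n d" "h' \<in> tuple_space n d"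
  shows "BB lam u (tadd h h') = BB lam u h + BB lam u h'"
  unfolding BB_def sum.distrib[symmetric]
  by (intro sum.cong refl) (simp add: ell_add assms bil_add2 ell_car algebra_simps)

end

lemma vec_cancel:
  fixes a b c :: "'a::ab_group_add vec"
  assumes "a \<in> carrier_vec n" "b \<in> carrier_vec n" "c \<in> carrier_vec n" "a + c = b + c"
  shows "a = b"
proof (rule eq_vecI)
  fix i assume "i < dim_vec b"
  hence i: "i < n" using assms by simp
  have "(a + c) $ i = (b + c) $ i" using assms by simp
  moreover have "(a + c) $ i = a $ i + c $ i" "(b + c) $ i = b $ i + c $ i"
    using i assms(1-3) by (simp_all add: carrier_vecD)
  ultimately show "a $ i = b $ i" by (metis add_right_cancel)
qed (use assms in simp)

context setting begin

lemma R_bound: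
  assumes lam: "lam \<in> PiE II (\<lambda>_. UNIV)" and nz: "\<exists>k\<in>II. lam k \<noteq> 0"
  shows "card {h \<in> tuple_space n d. \<forall>u\<in>tuple_space n d. BB lam u h = 0} * card (UNIV::'a set) ^ r
         \<le> card (tuple_space n d :: (nat \<Rightarrow> 'a vec) set)"
proof -
  let ?X = "tuple_space n d :: (nat \<Rightarrow> 'a vec) set"
  let ?R = "{h \<in> ?X. \<forall>u\<in>?X. BB lam u h = 0}"
  define lamC where "lamC r0 s0 j = (\<Sum>i<m. lam (i, j) * (gamma i r0 * gamma i s0))" for r0 s0 j
  have "\<exists>r0<d. \<exists>s0<d. \<exists>j<d2. lamC r0 s0 j \<noteq> 0"
  proof (rule ccontr)
    assume na: "\<not> (\<exists>r0<d. \<exists>s0<d. \<exists>j<d2. lamC r0 s0 j \<noteq> 0)"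
    obtain i j where ij: "i < m" "j < d2" "lam (i, j) \<noteq> 0" using nz unfolding II_def by auto
    have hyp: "\<forall>r<d. \<forall>s<d. (\<Sum>i<m. lam (i, j) * (gamma i r * gamma i s)) = 0"
    proof (intro allI impI)
      fix r s assume "r < d" "s < d"
      hence "lamC r s j = 0" using na ij(2) by auto
      thus "(\<Sum>i<m. lam (i, j) * (gamma i r * gamma i s)) = 0" unfolding lamC_def .
    qed
    have sq: "\<forall>c::nat \<Rightarrow> 'a. (\<forall>r<d. \<forall>s<d. (\<Sum>i<m. c i * (gamma i r * gamma i s)) = 0) \<longrightarrow> (\<forall>i<m. c i = 0)"
      using sqi unfolding square_independent_def .
    have "\<forall>i<m. lam (i, j) = 0" using spec[OF sq, of "\<lambda>i. lam (i, j)"] hyp by simp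
    thus False using ij by auto
  qed
  then obtain r0 s0 j0 where r0: "r0 < d" and s0: "s0 < d" and j0: "j0 < d2" and nzC: "lamC r0 s0 j0 \<noteq> 0"
    by auto
  let ?c = "lamC r0 s0"
  define G where "G = mat n n (\<lambda>(a, b). \<Sum>j<d2. ?c j * assoc_bilin (Ms j) (unit_vec n a) (unit_vec n b))"
  have Gc: "G \<in> carrier_mat n n" unfolding G_def by simp
  have ex: "\<exists>j<d2. ?c j \<noteq> 0" using j0 nzC by auto
  have rq: "\<forall>lam::nat \<Rightarrow> 'a. (\<exists>j<d2. lam j \<noteq> 0) \<longrightarrow>
        bilin_rank n (\<lambda>x y. \<Sum>j<d2. lam j * assoc_bilin (Ms j) x y) \<ge> r"
    using rkh unfolding quad_map_rank_ge_def .
  have "bilin_rank n (\<lambda>x y. \<Sum>j<d2. ?c j * assoc_bilin (Ms j) x y) \<ge> r"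
    using spec[OF rq, of ?c] ex by simp
  hence rkG: "vec_space.rank n G \<ge> r" unfolding bilin_rank_def G_def by simp
  have Gidx: "G $$ (a, b) = (\<Sum>j<d2. ?c j * Ms j $$ (a, b))" if ab: "a < n" "b < n" for a b
  proof -
    have "(\<Sum>j<d2. ?c j * assoc_bilin (Ms j) (unit_vec n a) (unit_vec n b)) = (\<Sum>j<d2. ?c j * Ms j $$ (a, b))"
    proof (rule sum.cong[OF refl])
      fix j assume "j \<in> {..<d2}"
      hence j: "j < d2" by simp
      have "assoc_bilin (Ms j) (unit_vec n a) (unit_vec n b) = bil n (Ms j) (unit_vec n a) (unit_vec n b)"
        by (rule assoc_bilin_eq[OF Ms_car[OF j] Ms_sym[OF j] two_nz]) auto
      thus "?c j * assoc_bilin (Ms j) (unit_vec n a) (unit_vec n b) = ?c j * Ms j $$ (a, b)"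
        using bil_unit[OF ab, of "Ms j"] by simp
    qed
    thus ?thesis unfolding G_def using ab by simp
  qed
  have bilG: "bil n G y w = (\<Sum>j<d2. ?c j * bil n (Ms j) y w)" for y w
  proof -
    have "bil n G y w = (\<Sum>a<n. \<Sum>b<n. \<Sum>j<d2. ?c j * (y $ a * Ms j $$ (a, b) * w $ b))"
      unfolding bil_def
      by (intro sum.cong refl) (simp add: Gidx sum_distrib_left sum_distrib_right ac_simps)
    also have "\<dots> = (\<Sum>a<n. \<Sum>j<d2. \<Sum>b<n. ?c j * (y $ a * Ms j $$ (a, b) * w $ b))"
      by (rule sum.cong[OF refl], rule sum.swap)
    also have "\<dots> = (\<Sum>j<d2. \<Sum>a<n. \<Sum>b<n. ?c j * (y $ a * Ms j $$ (a, b) * w $ b))"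
      by (rule sum.swap)
    also have "\<dots> = (\<Sum>j<d2. ?c j * bil n (Ms j) y w)"
      unfolding bil_def by (simp add: sum_distrib_left)
    finally show ?thesis .
  qed
  have BBsingle: "BB lam (single n r0 y) (single n s0 w) = 2 * bil n G y w"
    if y: "y \<in> carrier_vec n" and w: "w \<in> carrier_vec n" for y w
  proof -
    have "BB lam (single n r0 y) (single n s0 w)
        = (\<Sum>k\<in>II. 2 * (lam k * (gamma (fst k) r0 * gamma (fst k) s0) * bil n (Ms (snd k)) y w))"
      unfolding BB_def ell_def
      by (intro sum.cong refl) (simp add: ef_single r0 s0 y w bil_smult ac_simps)
    also have "\<dots> = 2 * (\<Sum>i<m. \<Sum>j<d2. lam (i, j) * (gamma i r0 * gamma i s0) * bil n (Ms j) y w)"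
      unfolding II_def by (simp add: sum_distrib_left sum.cartesian_product case_prod_unfold)
    also have "\<dots> = 2 * (\<Sum>j<d2. \<Sum>i<m. lam (i, j) * (gamma i r0 * gamma i s0) * bil n (Ms j) y w)"
      by (subst sum.swap) (rule refl)
    also have "\<dots> = 2 * bil n G y w"
      unfolding bilG lamC_def by (simp add: sum_distrib_right)
    finally show ?thesis .
  qed
  have Gzero: "G *\<^sub>v w = 0\<^sub>v n" if w: "w \<in> carrier_vec n" and z: "\<forall>y\<in>carrier_vec n. bil n G y w = 0" for w
  proof (rule eq_vecI)
    fix a assume "a < dim_vec (0\<^sub>v n)"
    hence a: "a < n" by simp
    have "(G *\<^sub>v w) $ a = bil n G (unit_vec n a) w"
      using mult_index[OF Gc w a] bil_unit1[OF a, of G w] by simp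
    thus "(G *\<^sub>v w) $ a = 0\<^sub>v n $ a" using z a by simp
  qed (use Gc in simp)
  have key: "G *\<^sub>v h s0 = G *\<^sub>v h' s0"
    if h: "h \<in> ?R" and h': "h' \<in> ?R" and agree: "\<forall>r. r \<noteq> s0 \<longrightarrow> h r = h' r" for h h'
  proof -
    have hX: "h \<in> ?X" and h'X: "h' \<in> ?X" using h h' by auto
    define w where "w = h s0 - h' s0"
    have wc: "w \<in> carrier_vec n" unfolding w_def using ts_carrier[OF hX] ts_carrier[OF h'X] by simp
    have sX: "single n s0 w \<in> ?X" by (rule single_ts[OF s0 wc])
    have hh: "tadd h' (single n s0 w) = h"
    proof
      fix r show "tadd h' (single n s0 w) r = h r"
      proof (cases "r = s0")
        case True
        show ?thesis unfolding tadd_def single_def w_def True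
          by (rule eq_vecI) (use ts_carrier[OF hX, of s0] ts_carrier[OF h'X, of s0] in auto)
      next
        case False
        thus ?thesis unfolding tadd_def single_def using agree ts_carrier[OF h'X, of r] by simp
      qed
    qed
    have "\<forall>y\<in>carrier_vec n. bil n G y w = 0"
    proof
      fix y :: "'a vec" assume y: "y \<in> carrier_vec n"
      have uX: "single n r0 y \<in> ?X" by (rule single_ts[OF r0 y])
      have "0 = BB lam (single n r0 y) h" using h uX by auto
      also have "\<dots> = BB lam (single n r0 y) h' + BB lam (single n r0 y) (single n s0 w)"
        using Badd2[OF uX h'X sX] hh by simp
      also have "\<dots> = 2 * bil n G y w" using h' uX BBsingle[OF y wc] by auto
      finally show "bil n G y w = 0" using two_nz by simp
    qed
    hence "G *\<^sub>v w = 0\<^sub>v n" using Gzero wc by blast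
    hence dz: "G *\<^sub>v h s0 - G *\<^sub>v h' s0 = 0\<^sub>v n"
      unfolding w_def using mult_minus_distrib_mat_vec[OF Gc ts_carrier[OF hX] ts_carrier[OF h'X]] by simp
    show ?thesis
    proof (rule eq_vecI)
      fix i assume "i < dim_vec (G *\<^sub>v h' s0)"
      hence i: "i < n" using Gc by simp
      have "(G *\<^sub>v h s0 - G *\<^sub>v h' s0) $ i = 0" using dz i by simp
      thus "(G *\<^sub>v h s0) $ i = (G *\<^sub>v h' s0) $ i" using i Gc by simp
    qed (use Gc in simp)
  qed
  obtain T where Tc: "T \<subseteq> carrier_vec n" and cT: "card (UNIV::'a set) ^ r \<le> card T"
    and injT: "inj_on (\<lambda>w. G *\<^sub>v w) T"
    using rank_inj[OF Gc rkG] by blast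
  let ?Th = "\<lambda>(h, t). h(s0 := h s0 + t)"
  have ThX: "?Th ` (?R \<times> T) \<subseteq> ?X"
  proof
    fix x assume "x \<in> ?Th ` (?R \<times> T)"
    then obtain h t where h: "h \<in> ?R" and t: "t \<in> T" and x: "x = h(s0 := h s0 + t)" by auto
    have "h \<in> ?X" using h by auto
    thus "x \<in> ?X" unfolding x ts_iff using s0 t Tc ts_carrier[of h n d s0] by auto
  qed
  have injTh: "inj_on ?Th (?R \<times> T)"
  proof (rule inj_onI)
    fix x y assume x: "x \<in> ?R \<times> T" and y: "y \<in> ?R \<times> T" and exy: "?Th x = ?Th y"
    obtain h t where xe: "x = (h, t)" by (cases x)
    obtain h' t' where ye: "y = (h', t')" by (cases y)
    have h: "h \<in> ?R" and t: "t \<in> T" using x xe by auto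
    have h': "h' \<in> ?R" and t': "t' \<in> T" using y ye by auto
    have eq: "h(s0 := h s0 + t) = h'(s0 := h' s0 + t')" using exy xe ye by simp
    have hX: "h \<in> ?X" and h'X: "h' \<in> ?X" using h h' by auto
    have hc: "h s0 \<in> carrier_vec n" "h' s0 \<in> carrier_vec n" using ts_carrier hX h'X by auto
    have tc: "t \<in> carrier_vec n" "t' \<in> carrier_vec n" using t t' Tc by auto
    have agree: "\<forall>r. r \<noteq> s0 \<longrightarrow> h r = h' r"
    proof (intro allI impI)
      fix r assume "r \<noteq> s0"
      thus "h r = h' r" using fun_cong[OF eq, of r] by simp
    qed
    have e0: "h s0 + t = h' s0 + t'" using fun_cong[OF eq, of s0] by simp
    have Gk: "G *\<^sub>v h s0 = G *\<^sub>v h' s0" using key[OF h h' agree] .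
    have "G *\<^sub>v h s0 + G *\<^sub>v t = G *\<^sub>v h' s0 + G *\<^sub>v t'"
      using e0 mult_add_distrib_mat_vec[OF Gc hc(1) tc(1)] mult_add_distrib_mat_vec[OF Gc hc(2) tc(2)] by simp
    hence "G *\<^sub>v t + G *\<^sub>v h s0 = G *\<^sub>v t' + G *\<^sub>v h s0"
      using Gk Gc hc tc by (simp add: comm_add_vec[of _ n])
    hence "G *\<^sub>v t = G *\<^sub>v t'"
      by (rule vec_cancel[rotated 3]) (use mult_mat_vec_carrier[OF Gc] hc tc in auto)
    hence tt: "t = t'" using injT t t' by (auto dest: inj_onD)
    hence "h s0 + t = h' s0 + t" using e0 by simp
    hence "h s0 = h' s0" by (rule vec_cancel[OF hc tc(1)])
    hence "h = h'" using agree by (intro ext) (metis)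
    thus "x = y" using tt xe ye by simp
  qed
  have finR: "finite ?R" by (rule finite_subset[OF _ finite_ts]) auto
  have finT: "finite T" using Tc finite_carrier_vec finite_subset by blast
  have "card ?R * card (UNIV::'a set) ^ r \<le> card ?R * card T" using cT by simp
  also have "\<dots> = card (?R \<times> T)" by (simp add: card_cartesian_product)
  also have "\<dots> \<le> card ?X" by (rule card_inj_on_le[OF injTh ThX finite_ts])
  finally show ?thesis .
qed

end

lemma sqrt_bound:
  fixes N x R q :: real
  assumes "N \<ge> 0" "x \<ge> 0" "q > 0" "N^2 \<le> x * R" "R * q \<le> x"
  shows "N \<le> x / sqrt q"
proof -
  have "N^2 * q \<le> x * R * q" using assms(3,4) by (simp add: mult_right_mono)
  also have "\<dots> = x * (R * q)" by simp
  also have "\<dots> \<le> x * x" using assms(2,5) by (simp add: mult_left_mono)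
  finally have a: "N^2 * q \<le> x^2" by (simp add: power2_eq_square)
  have "(N * sqrt q)^2 = N^2 * q" using assms(3) by (simp add: power_mult_distrib)
  hence "(N * sqrt q)^2 \<le> x^2" using a by simp
  hence "N * sqrt q \<le> x" using assms(2) by (rule power2_le_imp_le)
  thus ?thesis using assms(3) by (simp add: field_simps)
qed

context setting begin

lemma S_bound:
  assumes lam: "lam \<in> PiE II (\<lambda>_. UNIV)" and nz: "\<exists>k\<in>II. lam k \<noteq> 0"
  shows "norm (\<Sum>xs\<in>tuple_space n d. chi (ff lam xs))
     \<le> real (card (tuple_space n d :: (nat \<Rightarrow> 'a vec) set)) * real (card (UNIV::'a set)) powr (- real r / 2)"
proof -
  let ?X = "tuple_space n d :: (nat \<Rightarrow> 'a vec) set"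
  let ?R = "{h \<in> ?X. \<forall>u\<in>?X. BB lam u h = 0}"
  let ?P = "real (card (UNIV::'a set))"
  have P: "?P > 0" using prime prime_gt_0_nat by simp
  have g: "(norm (\<Sum>u\<in>?X. chi (ff lam u)))^2 \<le> real (card ?X) * real (card ?R)"
    by (rule gauss_bound[where add=tadd and f="ff lam" and B="BB lam" and c="cc lam"],
        rule prime, rule finite_ts, erule tadd_bij, erule (1) tadd_comm, erule (1) feq, erule (2) Badd1)
  have rb: "card ?R * card (UNIV::'a set) ^ r \<le> card ?X" by (rule R_bound[OF lam nz])
  hence "real (card ?R * card (UNIV::'a set) ^ r) \<le> real (card ?X)" by (simp only: of_nat_le_iff)
  hence rb': "real (card ?R) * ?P ^ r \<le> real (card ?X)" by (simp only: of_nat_mult of_nat_power)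
  have "norm (\<Sum>u\<in>?X. chi (ff lam u)) \<le> real (card ?X) / sqrt (?P ^ r)"
    by (rule sqrt_bound[OF norm_ge_zero of_nat_0_le_iff zero_less_power[OF P] g rb'])
  also have "sqrt (?P ^ r) = ?P powr (real r / 2)"
  proof -
    have e1: "?P ^ r = ?P powr (real r)" using P by (simp add: powr_realpow)
    have "sqrt (?P powr (real r)) = (?P powr (real r)) powr (1/2)" using P by (simp add: powr_half_sqrt)
    also have "\<dots> = ?P powr (real r / 2)" by (simp add: powr_powr)
    finally show ?thesis unfolding e1 .
  qed
  also have "real (card ?X) / \<dots> = real (card ?X) * ?P powr (- real r / 2)"
  proof -
    have "- real r / 2 = - (real r / 2)" by simp
    hence "?P powr (- real r / 2) = inverse (?P powr (real r / 2))" by (simp only: powr_minus)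
    thus ?thesis by (simp only: divide_inverse)
  qed
  finally show ?thesis .
qed

end

context setting begin

lemma sol_eq:
  assumes xs: "xs \<in> tuple_space n d"
  shows "(\<forall>i<m. quad_map d2 Ms (eval_form n d (gamma i) xs) = phi i xs + b i) \<longleftrightarrow> (\<forall>k\<in>II. F k xs = 0)"
proof -
  have one: "quad_map d2 Ms (eval_form n d (gamma i) xs) = phi i xs + b i \<longleftrightarrow>
      (\<forall>j<d2. F (i, j) xs = 0)" if i: "i < m" for i
  proof -
    have d1: "dim_vec (phi i xs + b i) = d2" using bc i by (simp add: carrier_vecD)
    have "quad_map d2 Ms (eval_form n d (gamma i) xs) = phi i xs + b i \<longleftrightarrow>
        (\<forall>j<d2. qform (Ms j) (ell i xs) = (phi i xs + b i) $ j)"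
      unfolding vec_eq_iff quad_map_def ell_def using d1 by auto
    also have "\<dots> \<longleftrightarrow> (\<forall>j<d2. F (i, j) xs = 0)" unfolding F_def by simp
    finally show ?thesis .
  qed
  show ?thesis unfolding II_def using one by auto
qed

lemma count_identity:
  "of_nat (card (UNIV::'a set) ^ card II) *
     of_nat (card {xs \<in> tuple_space n d. \<forall>i<m. quad_map d2 Ms (eval_form n d (gamma i) xs) = phi i xs + b i})
   = (\<Sum>lam\<in>PiE II (\<lambda>_. UNIV). \<Sum>xs\<in>tuple_space n d. chi (ff lam xs))"
proof -
  let ?X = "tuple_space n d :: (nat \<Rightarrow> 'a vec) set"
  have finII: "finite II" unfolding II_def by simp
  have fX: "finite ?X" by (rule finite_ts)
  have "(\<Sum>lam\<in>PiE II (\<lambda>_. UNIV). \<Sum>xs\<in>?X. chi (ff lam xs))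
      = (\<Sum>xs\<in>?X. \<Sum>lam\<in>PiE II (\<lambda>_. UNIV). chi (\<Sum>k\<in>II. lam k * F k xs))"
    unfolding ff_def by (rule sum.swap)
  also have "\<dots> = (\<Sum>xs\<in>?X. if \<forall>k\<in>II. F k xs = 0 then of_nat (card (UNIV::'a set)) ^ card II else 0)"
    by (intro sum.cong refl) (rule fourier_inv[OF prime finII])
  also have "\<dots> = of_nat (card {xs \<in> ?X. \<forall>k\<in>II. F k xs = 0}) * of_nat (card (UNIV::'a set)) ^ card II"
    using fX by (simp add: sum.inter_filter[symmetric])
  also have "{xs \<in> ?X. \<forall>k\<in>II. F k xs = 0} =
      {xs \<in> ?X. \<forall>i<m. quad_map d2 Ms (eval_form n d (gamma i) xs) = phi i xs + b i}"
    using sol_eq by blast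
  finally show ?thesis by (simp add: mult.commute)
qed

end

lemma final_arith:
  fixes N cX Pk c :: real
  assumes cX: "cX > 0" and Pk: "Pk \<ge> 1" and c: "c \<ge> 0" and h: "\<bar>Pk * N - cX\<bar> \<le> (Pk - 1) * cX * c"
  shows "\<bar>N / cX - 1 / Pk\<bar> \<le> c"
proof -
  have Pk0: "Pk > 0" using Pk by simp
  have e: "N / cX - 1 / Pk = (Pk * N - cX) / (Pk * cX)" using cX Pk0 by (simp add: field_simps)
  have "\<bar>N / cX - 1 / Pk\<bar> = \<bar>Pk * N - cX\<bar> / (Pk * cX)" unfolding e using cX Pk0 by (simp add: abs_divide)
  also have "\<dots> \<le> (Pk - 1) * cX * c / (Pk * cX)" by (rule divide_right_mono[OF h]) (use cX Pk0 in simp)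
  also have "\<dots> = (Pk - 1) / Pk * c" using cX Pk0 by (simp add: field_simps)
  also have "\<dots> \<le> 1 * c" using Pk0 c by (intro mult_right_mono) auto
  finally show ?thesis by simp
qed

context setting begin

lemma main_bound:
  "\<bar>real (card {xs \<in> tuple_space n d.
              \<forall>i<m. quad_map d2 Ms (eval_form n d (gamma i) xs) = phi i xs + b i})
            / real (card (tuple_space n d :: (nat \<Rightarrow> 'a vec) set))
          - 1 / real (card (UNIV::'a set)) ^ (m * d2)\<bar> \<le> real (card (UNIV::'a set)) powr (- real r / 2)"
proof -
  let ?X = "tuple_space n d :: (nat \<Rightarrow> 'a vec) set"
  let ?N = "card {xs \<in> ?X. \<forall>i<m. quad_map d2 Ms (eval_form n d (gamma i) xs) = phi i xs + b i}"
  let ?L = "PiE II (\<lambda>_. UNIV :: 'a set)"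
  let ?S = "\<lambda>lam. \<Sum>xs\<in>?X. chi (ff lam xs)"
  let ?p = "card (UNIV::'a set)"
  let ?c = "real ?p powr (- real r / 2)"
  define l0 where "l0 = restrict (\<lambda>_. 0::'a) II"
  have finII: "finite II" unfolding II_def by simp
  have cII: "card II = m * d2" unfolding II_def by (simp add: card_cartesian_product)
  have p1: "?p \<ge> 1" using prime prime_gt_0_nat by (simp add: Suc_le_eq)
  have fL: "finite ?L" using finII by (simp add: finite_PiE)
  have cL: "card ?L = ?p ^ card II" using finII by (simp add: card_PiE)
  have l0L: "l0 \<in> ?L" unfolding l0_def by simp
  have fX: "finite ?X" by (rule finite_ts)
  have cX: "card ?X > 0" using fX zero_ts card_gt_0_iff by blast
  have S0: "?S l0 = of_nat (card ?X)"
  proof -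
    have "ff l0 xs = 0" for xs unfolding ff_def l0_def by simp
    thus ?thesis by (simp add: chi_zero[OF prime])
  qed
  have Sb: "norm (?S lam) \<le> real (card ?X) * ?c" if lam: "lam \<in> ?L - {l0}" for lam
  proof (rule S_bound)
    show "lam \<in> ?L" using lam by simp
    show "\<exists>k\<in>II. lam k \<noteq> 0"
    proof (rule ccontr)
      assume "\<not> (\<exists>k\<in>II. lam k \<noteq> 0)"
      hence "lam = l0" using lam unfolding l0_def by (intro ext) (auto simp: PiE_iff extensional_def)
      thus False using lam by simp
    qed
  qed
  let ?A = "\<Sum>lam\<in>?L - {l0}. ?S lam"
  have ci: "of_nat (?p ^ card II) * of_nat ?N = of_nat (card ?X) + ?A"
    unfolding count_identity sum.remove[OF fL l0L] S0 ..
  have nA: "norm ?A \<le> real (card (?L - {l0})) * (real (card ?X) * ?c)"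
  proof -
    have "norm ?A \<le> (\<Sum>lam\<in>?L - {l0}. norm (?S lam))" by (rule norm_sum)
    also have "\<dots> \<le> real (card (?L - {l0})) * (real (card ?X) * ?c)"
      by (rule sum_bounded_above) (rule Sb)
    finally show ?thesis .
  qed
  have cL0: "card (?L - {l0}) = ?p ^ card II - 1" using cL fL l0L by (simp add: card_Diff_singleton)
  define rv where "rv = real (?p ^ card II) * real ?N - real (card ?X)"
  have eqA: "?A = complex_of_real rv"
    using ci unfolding rv_def by (simp add: algebra_simps)
  have "\<bar>real (?p ^ card II) * real ?N - real (card ?X)\<bar> = norm ?A"
    unfolding eqA norm_of_real rv_def ..
  also have "\<dots> \<le> (real (?p ^ card II) - 1) * real (card ?X) * ?c"
    using nA cL0 p1 by (simp add: of_nat_diff mult.assoc)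
  finally have h: "\<bar>real ?p ^ (m * d2) * real ?N - real (card ?X)\<bar> \<le> (real ?p ^ (m * d2) - 1) * real (card ?X) * ?c"
    unfolding cII by simp
  show ?thesis
    by (rule final_arith[OF _ _ _ h]) (use cX p1 in auto)
qed

end

theorem lemma3p6:
  fixes p n d m d2 r :: nat
    and gamma :: "nat \<Rightarrow> nat \<Rightarrow> 'a::{field,finite}"
    and Ms :: "nat \<Rightarrow> 'a mat"
    and phi :: "nat \<Rightarrow> (nat \<Rightarrow> 'a vec) \<Rightarrow> 'a vec"
    and b :: "nat \<Rightarrow> 'a vec"
  assumes "card (UNIV :: 'a set) = p" and "prime p" and "odd p"
    and "square_independent m d gamma"
    and "\<forall>j<d2. quadratic_form_matrix n (Ms j)"
    and "quad_map_rank_ge n d2 Ms r"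
    and "\<forall>i<m. tuple_linear n d d2 (phi i)"
    and "\<forall>i<m. b i \<in> carrier_vec d2"
  shows "\<bar>real (card {xs \<in> tuple_space n d.
              \<forall>i<m. quad_map d2 Ms (eval_form n d (gamma i) xs) = phi i xs + b i})
            / real (card (tuple_space n d :: (nat \<Rightarrow> 'a vec) set))
          - 1 / real p ^ (m * d2)\<bar> \<le> real p powr (- real r / 2)"
proof -
  interpret S: setting n d m d2 r gamma Ms phi b
    by (unfold_locales) (use assms in auto)
  show ?thesis using S.main_bound assms(1) by simp
qed

end
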